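(* For each $X\in\{\mathrm{B_{ii}},\mathrm{B_{vi}},\mathrm{H_{ii}},\mathrm{H_{iii}}\}$, let $G_X$ be the group with generators $a,b,c$ and relations $\mathrm{B_{ii}}$: $ababab=bababa,\ bc=ab,\ ac=ca$; $\mathrm{B_{vi}}$: $aba=bab,\ aca=bac,\ acaca=cacac$; $\mathrm{H_{ii}}$: $abab=baba,\ aca=bac,\ acaca=cacac$; $\mathrm{H_{iii}}$: $aba=bab,\ bcba=cbac,\ cba=acb$; and let $G_X^+$ be the submonoid generated by $a,b,c$. If $\Delta\in G_X^+$ is quasi-central with associated permutation $\sigma$ of $\{a,b,c\}$, i.e. $x\Delta=\Delta\sigma(x)$ for all $x\in\{a,b,c\}$, then $\sigma$ is the identity. That is, $\sigma(\mathcal{QZ}(G_X^+))$ consists only of the identity.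
   Context: For a monoid generated by $\{a,b,c\}$ (with no two generators equal, as here), an element $\Delta$ is quasi-central if there is a permutation $\sigma_\Delta$ of $\{a,b,c\}$ with $x\Delta=\Delta\sigma_\Delta(x)$ for all generators $x$; $\mathcal{QZ}$ denotes the set of quasi-central elements. *)

theory Defs
  imports Main
begin

text \<open>Generators a, b, c.  Group words are lists of letters (g, True) = g and (g, False) = g inverse.\<close>
datatype gen = A | B | C

type_synonym letter = "gen \<times> bool"

definition pos :: "gen list \<Rightarrow> letter list" where
  "pos w = map (\<lambda>g. (g, True)) w"

inductive grp_eq :: "(gen list \<times> gen list) set \<Rightarrow> letter list \<Rightarrow> letter list \<Rightarrow> bool"
  for R where
  refl: "grp_eq R u u"
| sym: "grp_eq R u v \<Longrightarrow> grp_eq R v u"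
| trans: "grp_eq R u v \<Longrightarrow> grp_eq R v w \<Longrightarrow> grp_eq R u w"
| rel: "(l, r) \<in> R \<Longrightarrow> grp_eq R (u @ pos l @ v) (u @ pos r @ v)"
| cancel: "grp_eq R (u @ [(x, e), (x, \<not> e)] @ v) (u @ v)"

datatype pres = Bii | Bvi | Hii | Hiii

fun rels :: "pres \<Rightarrow> (gen list \<times> gen list) set" where
  "rels Bii = {([A,B,A,B,A,B], [B,A,B,A,B,A]), ([B,C], [A,B]), ([A,C], [C,A])}"
| "rels Bvi = {([A,B,A], [B,A,B]), ([A,C,A], [B,A,C]), ([A,C,A,C,A], [C,A,C,A,C])}"
| "rels Hii = {([A,B,A,B], [B,A,B,A]), ([A,C,A], [B,A,C]), ([A,C,A,C,A], [C,A,C,A,C])}"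
| "rels Hiii = {([A,B,A], [B,A,B]), ([B,C,B,A], [C,B,A,C]), ([C,B,A], [A,C,B])}"

definition quasi_central :: "pres \<Rightarrow> gen list \<Rightarrow> (gen \<Rightarrow> gen) \<Rightarrow> bool" where
  "quasi_central X w \<sigma> \<longleftrightarrow> bij \<sigma> \<and>
     (\<forall>x. grp_eq (rels X) (pos ([x] @ w)) (pos (w @ [\<sigma> x])))"

end

theory Submission
  imports Defs
begin

definition tab :: "nat list \<Rightarrow> nat \<Rightarrow> nat" where
  "tab p i = (if i < length p then p ! i else i)"

fun evw :: "(letter \<Rightarrow> nat \<Rightarrow> nat) \<Rightarrow> letter list \<Rightarrow> nat \<Rightarrow> nat" where
  "evw f [] = id"
| "evw f (l # w) = f l \<circ> evw f w"

lemma evw_append: "evw f (u @ v) = evw f u \<circ> evw f v"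
  by (induction u) (auto simp: comp_assoc)

definition respR :: "(letter \<Rightarrow> nat \<Rightarrow> nat) \<Rightarrow> (gen list \<times> gen list) set \<Rightarrow> bool" where
  "respR f R \<longleftrightarrow> (\<forall>(l, r)\<in>R. evw f (pos l) = evw f (pos r)) \<and> (\<forall>x e. f (x, e) \<circ> f (x, \<not> e) = id)"

lemma grp_eq_evw:
  assumes "grp_eq R u v" "respR f R"
  shows "evw f u = evw f v"
  using assms(1)
proof (induction rule: grp_eq.induct)
  case (rel l r u v)
  then show ?case using assms(2) unfolding respR_def by (auto simp: evw_append)
next
  case (cancel u x e v)
  have "f (x, e) \<circ> f (x, \<not> e) = id" using assms(2) unfolding respR_def by blast
  then have "f (x, e) \<circ> (f (x, \<not> e) \<circ> evw f v) = evw f v" by (metis comp_assoc id_comp)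
  then show ?case by (simp add: evw_append)
qed auto

lemma bij_evw:
  assumes "\<forall>x e. f (x, e) \<circ> f (x, \<not> e) = id"
  shows "bij (evw f w)"
proof (induction w)
  case Nil then show ?case by (simp add: id_def[symmetric])
next
  case (Cons l w)
  obtain x e where l: "l = (x, e)" by (cases l)
  have "f (x, e) \<circ> f (x, \<not> e) = id" "f (x, \<not> e) \<circ> f (x, e) = id"
    using assms[rule_format, of x e] assms[rule_format, of x "\<not> e"] by auto
  then have "bij (f l)" unfolding l by (metis o_bij)
  then have "bij (f l \<circ> evw f w)" using Cons bij_comp by blast
  then show ?case by (simp only: evw.simps)
qed

definition moved :: "(nat \<Rightarrow> nat) \<Rightarrow> nat" where
  "moved F = card {i. F i \<noteq> i}"

lemma moved_conj:
  assumes "F \<circ> H = H \<circ> G" "bij H"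
  shows "moved F = moved G"
proof -
  have "{j. F j \<noteq> j} = H ` {i. G i \<noteq> i}"
  proof
    show "{j. F j \<noteq> j} \<subseteq> H ` {i. G i \<noteq> i}"
    proof
      fix j assume "j \<in> {j. F j \<noteq> j}"
      obtain i where i: "j = H i" using assms(2) by (metis bij_pointE)
      have "F (H i) = H (G i)" using assms(1) by (metis comp_apply)
      then have "G i \<noteq> i" using \<open>j \<in> _\<close> i by auto
      then show "j \<in> H ` {i. G i \<noteq> i}" using i by auto
    qed
  next
    show "H ` {i. G i \<noteq> i} \<subseteq> {j. F j \<noteq> j}"
    proof
      fix j assume "j \<in> H ` {i. G i \<noteq> i}"
      then obtain i where i: "j = H i" "G i \<noteq> i" by auto
      have "F (H i) = H (G i)" using assms(1) by (metis comp_apply)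
      moreover have "H (G i) \<noteq> H i" using i(2) assms(2) by (metis bij_is_inj injD)
      ultimately show "j \<in> {j. F j \<noteq> j}" using i by auto
    qed
  qed
  then show ?thesis unfolding moved_def
    using card_image[OF inj_on_subset[OF bij_is_inj[OF assms(2)] subset_UNIV]] by simp
qed

definition smap :: "(gen \<Rightarrow> gen) \<Rightarrow> letter list \<Rightarrow> letter list" where
  "smap \<sigma> u = map (\<lambda>(g, e). (\<sigma> g, e)) u"

lemma qc_moved:
  assumes "respR f (rels X)" "quasi_central X w \<sigma>"
  shows "moved (evw f u) = moved (evw f (smap \<sigma> u))"
proof -
  define H where "H = evw f (pos w)"
  have inv: "\<forall>x e. f (x, e) \<circ> f (x, \<not> e) = id" using assms(1) unfolding respR_def by blast
  have bH: "bij H" unfolding H_def using bij_evw[OF inv] .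
  have T: "f (x, True) \<circ> H = H \<circ> f (\<sigma> x, True)" for x
  proof -
    have "grp_eq (rels X) (pos ([x] @ w)) (pos (w @ [\<sigma> x]))"
      using assms(2) unfolding quasi_central_def by blast
    from grp_eq_evw[OF this assms(1)] show ?thesis
      by (simp add: H_def pos_def evw_append)
  qed
  have F: "f (x, False) \<circ> H = H \<circ> f (\<sigma> x, False)" for x
  proof -
    have i1: "f (x, False) \<circ> f (x, True) = id" using inv by (metis (full_types))
    have i2: "f (\<sigma> x, True) \<circ> f (\<sigma> x, False) = id" using inv by (metis (full_types))
    have "f (x, False) \<circ> H = f (x, False) \<circ> H \<circ> (f (\<sigma> x, True) \<circ> f (\<sigma> x, False))"
      using i2 by simp
    also have "\<dots> = f (x, False) \<circ> (f (x, True) \<circ> H) \<circ> f (\<sigma> x, False)"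
      using T by (simp add: comp_assoc)
    also have "\<dots> = H \<circ> f (\<sigma> x, False)" using i1 by (simp add: comp_assoc[symmetric])
    finally show ?thesis .
  qed
  have L: "f l \<circ> H = H \<circ> f ((\<lambda>(g, e). (\<sigma> g, e)) l)" for l
    using T F by (cases l; case_tac b) auto
  have "evw f u \<circ> H = H \<circ> evw f (smap \<sigma> u)"
  proof (induction u)
    case Nil then show ?case by (simp add: smap_def)
  next
    case (Cons l u)
    have "evw f (l # u) \<circ> H = f l \<circ> (evw f u \<circ> H)" by (simp add: comp_assoc)
    also have "\<dots> = f l \<circ> (H \<circ> evw f (smap \<sigma> u))" by (simp only: Cons.IH)
    also have "\<dots> = (f l \<circ> H) \<circ> evw f (smap \<sigma> u)" by (simp only: comp_assoc)
    also have "\<dots> = H \<circ> evw f (smap \<sigma> (l # u))" using L by (simp add: smap_def comp_assoc)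
    finally show ?case .
  qed
  then show ?thesis using moved_conj bH by blast
qed

lemma moved_compute:
  assumes "\<forall>i\<ge>n. F i = i"
  shows "moved F = length (filter (\<lambda>i. F i \<noteq> i) [0..<n])"
proof -
  have "{i. F i \<noteq> i} = set (filter (\<lambda>i. F i \<noteq> i) [0..<n])"
    using assms by (auto simp: not_le[symmetric])
  moreover have "card (set (filter (\<lambda>i. F i \<noteq> i) [0..<n])) = length (filter (\<lambda>i. F i \<noteq> i) [0..<n])"
    by (rule distinct_card) simp
  ultimately show ?thesis unfolding moved_def by simp
qed

lemma evw_fix:
  assumes "\<forall>l i. n \<le> i \<longrightarrow> f l i = i"
  shows "\<forall>i\<ge>n. evw f u i = i"
  using assms by (induction u) auto

lemma fun_eq_n:
  assumes "\<forall>i\<ge>n. F i = i" "\<forall>i\<ge>n. G i = i" "map F [0..<n] = map G [0..<n]"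
  shows "F = G"
proof
  fix i show "F i = G i"
  proof (cases "i < n")
    case True
    then show ?thesis using assms(3) by (metis (no_types, lifting) add_0 diff_zero length_upt nth_map nth_upt)
  next
    case False then show ?thesis using assms by auto
  qed
qed

fun fBii :: "letter \<Rightarrow> nat \<Rightarrow> nat" where
  "fBii (A,True) = tab [1,0,3,2]"
|   "fBii (A,False) = tab [1,0,3,2]"
|   "fBii (B,True) = tab [0,2,3,1]"
|   "fBii (B,False) = tab [0,3,1,2]"
|   "fBii (C,True) = tab [3,2,1,0]"
|   "fBii (C,False) = tab [3,2,1,0]"

fun fBvi :: "letter \<Rightarrow> nat \<Rightarrow> nat" where
  "fBvi (A,True) = tab [1,2,3,4,0]"
|   "fBvi (A,False) = tab [4,0,1,2,3]"
|   "fBvi (B,True) = tab [2,0,4,1,3]"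
|   "fBvi (B,False) = tab [1,3,0,4,2]"
|   "fBvi (C,True) = tab [3,2,0,4,1]"
|   "fBvi (C,False) = tab [2,4,1,0,3]"

fun fHii :: "letter \<Rightarrow> nat \<Rightarrow> nat" where
  "fHii (A,True) = tab [0,1,3,4,2]"
|   "fHii (A,False) = tab [0,1,4,2,3]"
|   "fHii (B,True) = tab [0,2,3,1,4]"
|   "fHii (B,False) = tab [0,3,1,2,4]"
|   "fHii (C,True) = tab [3,0,2,1,4]"
|   "fHii (C,False) = tab [1,3,2,0,4]"

fun fHiii :: "letter \<Rightarrow> nat \<Rightarrow> nat" where
  "fHiii (A,True) = tab [1,2,3,4,0]"
|   "fHiii (A,False) = tab [4,0,1,2,3]"
|   "fHiii (B,True) = tab [2,0,4,1,3]"
|   "fHiii (B,False) = tab [1,3,0,4,2]"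
|   "fHiii (C,True) = tab [2,4,1,0,3]"
|   "fHiii (C,False) = tab [3,2,0,4,1]"



lemma fix_Bii: "\<forall>l i. 4 \<le> i \<longrightarrow> fBii l i = i"
proof (intro allI impI)
  fix l :: letter and i :: nat assume "4 \<le> i"
  then show "fBii l i = i" by (cases l; case_tac a; case_tac b) (auto simp: tab_def)
qed

lemma evfix_Bii: "\<forall>i\<ge>4. evw fBii u i = i"
  using evw_fix[OF fix_Bii] .

lemma resp_Bii: "respR fBii (rels Bii)"
  unfolding respR_def
proof (intro conjI allI ballI)
  fix p assume "p \<in> rels Bii"
  then show "case p of (l, r) \<Rightarrow> evw fBii (pos l) = evw fBii (pos r)"
    by (auto intro!: fun_eq_n[OF evfix_Bii evfix_Bii] simp: pos_def tab_def upt_rec)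
next
  fix x e
  have "\<forall>i\<ge>4. (fBii (x, e) \<circ> fBii (x, \<not> e)) i = i" using fix_Bii by simp
  moreover have "\<forall>i\<ge>4. id i = i" by simp
  moreover have "map (fBii (x, e) \<circ> fBii (x, \<not> e)) [0..<4] = map id [0..<4]"
    by (cases x; cases e) (auto simp: tab_def upt_rec)
  ultimately show "fBii (x, e) \<circ> fBii (x, \<not> e) = id" by (rule fun_eq_n)
qed

lemma main_Bii:
  assumes "quasi_central Bii w \<sigma>"
  shows "\<sigma> = id"
proof -
  have M: "moved (evw fBii u) = moved (evw fBii (smap \<sigma> u))" for u
    using qc_moved[OF resp_Bii assms] .
  have C: "moved (evw fBii u) = length (filter (\<lambda>i. evw fBii u i \<noteq> i) [0..<4])" for u
    using moved_compute[OF evfix_Bii] .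
  have m1: "moved (evw fBii [(B,True)]) = moved (evw fBii (smap \<sigma> [(B,True)]))" by (rule M)
  have m2: "moved (evw fBii [(A,True)]) = moved (evw fBii (smap \<sigma> [(A,True)]))" by (rule M)
  have m3: "moved (evw fBii [(A,True),(B,True),(C,True),(B,False)]) = moved (evw fBii (smap \<sigma> [(A,True),(B,True),(C,True),(B,False)]))" by (rule M)
  have inj: "inj \<sigma>" using assms unfolding quasi_central_def by (simp add: bij_is_inj)
  then have d: "\<sigma> A \<noteq> \<sigma> B" "\<sigma> A \<noteq> \<sigma> C" "\<sigma> B \<noteq> \<sigma> C"
    by (auto dest: injD)
  have "\<sigma> A = A \<and> \<sigma> B = B \<and> \<sigma> C = C"
    using m1 m2 m3 d unfolding C
    by (cases "\<sigma> A"; cases "\<sigma> B"; cases "\<sigma> C"; simp add: C smap_def tab_def upt_rec)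
  then show ?thesis by (intro ext, case_tac x) auto
qed

lemma fix_Bvi: "\<forall>l i. 5 \<le> i \<longrightarrow> fBvi l i = i"
proof (intro allI impI)
  fix l :: letter and i :: nat assume "5 \<le> i"
  then show "fBvi l i = i" by (cases l; case_tac a; case_tac b) (auto simp: tab_def)
qed

lemma evfix_Bvi: "\<forall>i\<ge>5. evw fBvi u i = i"
  using evw_fix[OF fix_Bvi] .

lemma resp_Bvi: "respR fBvi (rels Bvi)"
  unfolding respR_def
proof (intro conjI allI ballI)
  fix p assume "p \<in> rels Bvi"
  then show "case p of (l, r) \<Rightarrow> evw fBvi (pos l) = evw fBvi (pos r)"
    by (auto intro!: fun_eq_n[OF evfix_Bvi evfix_Bvi] simp: pos_def tab_def upt_rec)
next
  fix x e
  have "\<forall>i\<ge>5. (fBvi (x, e) \<circ> fBvi (x, \<not> e)) i = i" using fix_Bvi by simp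
  moreover have "\<forall>i\<ge>5. id i = i" by simp
  moreover have "map (fBvi (x, e) \<circ> fBvi (x, \<not> e)) [0..<5] = map id [0..<5]"
    by (cases x; cases e) (auto simp: tab_def upt_rec)
  ultimately show "fBvi (x, e) \<circ> fBvi (x, \<not> e) = id" by (rule fun_eq_n)
qed

lemma main_Bvi:
  assumes "quasi_central Bvi w \<sigma>"
  shows "\<sigma> = id"
proof -
  have M: "moved (evw fBvi u) = moved (evw fBvi (smap \<sigma> u))" for u
    using qc_moved[OF resp_Bvi assms] .
  have C: "moved (evw fBvi u) = length (filter (\<lambda>i. evw fBvi u i \<noteq> i) [0..<5])" for u
    using moved_compute[OF evfix_Bvi] .
  have m1: "moved (evw fBvi [(A,True),(B,True)]) = moved (evw fBvi (smap \<sigma> [(A,True),(B,True)]))" by (rule M)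
  have m2: "moved (evw fBvi [(A,True),(C,True)]) = moved (evw fBvi (smap \<sigma> [(A,True),(C,True)]))" by (rule M)
  have m3: "moved (evw fBvi [(A,True),(B,True),(C,True)]) = moved (evw fBvi (smap \<sigma> [(A,True),(B,True),(C,True)]))" by (rule M)
  have inj: "inj \<sigma>" using assms unfolding quasi_central_def by (simp add: bij_is_inj)
  then have d: "\<sigma> A \<noteq> \<sigma> B" "\<sigma> A \<noteq> \<sigma> C" "\<sigma> B \<noteq> \<sigma> C"
    by (auto dest: injD)
  have "\<sigma> A = A \<and> \<sigma> B = B \<and> \<sigma> C = C"
    using m1 m2 m3 d unfolding C
    by (cases "\<sigma> A"; cases "\<sigma> B"; cases "\<sigma> C"; simp add: C smap_def tab_def upt_rec)
  then show ?thesis by (intro ext, case_tac x) auto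
qed

lemma fix_Hii: "\<forall>l i. 5 \<le> i \<longrightarrow> fHii l i = i"
proof (intro allI impI)
  fix l :: letter and i :: nat assume "5 \<le> i"
  then show "fHii l i = i" by (cases l; case_tac a; case_tac b) (auto simp: tab_def)
qed

lemma evfix_Hii: "\<forall>i\<ge>5. evw fHii u i = i"
  using evw_fix[OF fix_Hii] .

lemma resp_Hii: "respR fHii (rels Hii)"
  unfolding respR_def
proof (intro conjI allI ballI)
  fix p assume "p \<in> rels Hii"
  then show "case p of (l, r) \<Rightarrow> evw fHii (pos l) = evw fHii (pos r)"
    by (auto intro!: fun_eq_n[OF evfix_Hii evfix_Hii] simp: pos_def tab_def upt_rec)
next
  fix x e
  have "\<forall>i\<ge>5. (fHii (x, e) \<circ> fHii (x, \<not> e)) i = i" using fix_Hii by simp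
  moreover have "\<forall>i\<ge>5. id i = i" by simp
  moreover have "map (fHii (x, e) \<circ> fHii (x, \<not> e)) [0..<5] = map id [0..<5]"
    by (cases x; cases e) (auto simp: tab_def upt_rec)
  ultimately show "fHii (x, e) \<circ> fHii (x, \<not> e) = id" by (rule fun_eq_n)
qed

lemma main_Hii:
  assumes "quasi_central Hii w \<sigma>"
  shows "\<sigma> = id"
proof -
  have M: "moved (evw fHii u) = moved (evw fHii (smap \<sigma> u))" for u
    using qc_moved[OF resp_Hii assms] .
  have C: "moved (evw fHii u) = length (filter (\<lambda>i. evw fHii u i \<noteq> i) [0..<5])" for u
    using moved_compute[OF evfix_Hii] .
  have m1: "moved (evw fHii [(A,True),(B,True)]) = moved (evw fHii (smap \<sigma> [(A,True),(B,True)]))" by (rule M)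
  have m2: "moved (evw fHii [(A,True),(C,True)]) = moved (evw fHii (smap \<sigma> [(A,True),(C,True)]))" by (rule M)
  have m3: "moved (evw fHii [(A,True),(B,True),(C,True)]) = moved (evw fHii (smap \<sigma> [(A,True),(B,True),(C,True)]))" by (rule M)
  have inj: "inj \<sigma>" using assms unfolding quasi_central_def by (simp add: bij_is_inj)
  then have d: "\<sigma> A \<noteq> \<sigma> B" "\<sigma> A \<noteq> \<sigma> C" "\<sigma> B \<noteq> \<sigma> C"
    by (auto dest: injD)
  have "\<sigma> A = A \<and> \<sigma> B = B \<and> \<sigma> C = C"
    using m1 m2 m3 d unfolding C
    by (cases "\<sigma> A"; cases "\<sigma> B"; cases "\<sigma> C"; simp add: C smap_def tab_def upt_rec)
  then show ?thesis by (intro ext, case_tac x) auto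
qed

lemma fix_Hiii: "\<forall>l i. 5 \<le> i \<longrightarrow> fHiii l i = i"
proof (intro allI impI)
  fix l :: letter and i :: nat assume "5 \<le> i"
  then show "fHiii l i = i" by (cases l; case_tac a; case_tac b) (auto simp: tab_def)
qed

lemma evfix_Hiii: "\<forall>i\<ge>5. evw fHiii u i = i"
  using evw_fix[OF fix_Hiii] .

lemma resp_Hiii: "respR fHiii (rels Hiii)"
  unfolding respR_def
proof (intro conjI allI ballI)
  fix p assume "p \<in> rels Hiii"
  then show "case p of (l, r) \<Rightarrow> evw fHiii (pos l) = evw fHiii (pos r)"
    by (auto intro!: fun_eq_n[OF evfix_Hiii evfix_Hiii] simp: pos_def tab_def upt_rec)
next
  fix x e
  have "\<forall>i\<ge>5. (fHiii (x, e) \<circ> fHiii (x, \<not> e)) i = i" using fix_Hiii by simp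
  moreover have "\<forall>i\<ge>5. id i = i" by simp
  moreover have "map (fHiii (x, e) \<circ> fHiii (x, \<not> e)) [0..<5] = map id [0..<5]"
    by (cases x; cases e) (auto simp: tab_def upt_rec)
  ultimately show "fHiii (x, e) \<circ> fHiii (x, \<not> e) = id" by (rule fun_eq_n)
qed

lemma main_Hiii:
  assumes "quasi_central Hiii w \<sigma>"
  shows "\<sigma> = id"
proof -
  have M: "moved (evw fHiii u) = moved (evw fHiii (smap \<sigma> u))" for u
    using qc_moved[OF resp_Hiii assms] .
  have C: "moved (evw fHiii u) = length (filter (\<lambda>i. evw fHiii u i \<noteq> i) [0..<5])" for u
    using moved_compute[OF evfix_Hiii] .
  have m1: "moved (evw fHiii [(A,True),(B,True)]) = moved (evw fHiii (smap \<sigma> [(A,True),(B,True)]))" by (rule M)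
  have m2: "moved (evw fHiii [(A,True),(C,True)]) = moved (evw fHiii (smap \<sigma> [(A,True),(C,True)]))" by (rule M)
  have m3: "moved (evw fHiii [(A,True),(B,True),(C,True)]) = moved (evw fHiii (smap \<sigma> [(A,True),(B,True),(C,True)]))" by (rule M)
  have inj: "inj \<sigma>" using assms unfolding quasi_central_def by (simp add: bij_is_inj)
  then have d: "\<sigma> A \<noteq> \<sigma> B" "\<sigma> A \<noteq> \<sigma> C" "\<sigma> B \<noteq> \<sigma> C"
    by (auto dest: injD)
  have "\<sigma> A = A \<and> \<sigma> B = B \<and> \<sigma> C = C"
    using m1 m2 m3 d unfolding C
    by (cases "\<sigma> A"; cases "\<sigma> B"; cases "\<sigma> C"; simp add: C smap_def tab_def upt_rec)
  then show ?thesis by (intro ext, case_tac x) auto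
qed

theorem mainTheorem10:
  fixes X :: pres and w :: "gen list" and \<sigma> :: "gen \<Rightarrow> gen"
  assumes "quasi_central X w \<sigma>"
  shows "\<sigma> = id"
  using assms main_Bii main_Bvi main_Hii main_Hiii by (cases X) auto

end
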